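(* Consider a length-$l$ segment embedded in a gapped translation-invariant 1D free-fermion lattice system with $L$ unit cells, $1\le l<L\le\infty$, under periodic boundary conditions, and denote by $P^{(L)}_<$ the single-particle projector onto the Fermi sea. Assume that there are constants $C>0$ and $\kappa>0$ independent of $j,j'$ such that $$\|\langle j|P^{(\infty)}_<|j'\rangle\|\le Ce^{-\kappa|j-j'|}\quad\forall j,j'\in\mathbb{Z}.$$ Then $$\|P_SP^{(L)}_<P_S-P_SP^{(\infty)}_<P_S\|\le\frac{2C\sinh(\kappa l)}{(e^{\kappa L}-1)\sinh\kappa},$$ where $P_S=\sum_{j=1}^l|j\rangle\langle j|\otimes\mathbb{1}_{\rm I}$ is the projector onto the segment.
   Context: The system has $d$ internal states per unit cell, $\mathbb{1}_{\rm I}$ is the identity on $\mathbb{C}^d$, $\|\cdot\|$ the operator norm, and $\langle j|P|j'\rangle$ the $d\times d$ block between unit cells $j,j'$. Both $P^{(L)}_<$ and $P^{(\infty)}_<$ come from the same Bloch projector $P_<(k)$ onto the occupied bands: $\langle j|P^{(\infty)}_<|j'\rangle=\int_{-\pi}^{\pi}\frac{dk}{2\pi}e^{ik(j-j')}P_<(k)$ and $\langle j|P^{(L)}_<|j'\rangle=\frac1L\sum_{k\in\frac{2\pi}{L}\{1,\dots,L\}}e^{ik(j-j')}P_<(k)$; the segment consists of unit cells $1,\dots,l$, viewed inside both the finite and the infinite lattice. *)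

theory Defs
  imports "HOL-Analysis.Analysis"
begin

definition mat_opnorm :: "'i set \<Rightarrow> ('i \<Rightarrow> 'i \<Rightarrow> complex) \<Rightarrow> real" where
  "mat_opnorm I M =
     (SUP v \<in> {v :: 'i \<Rightarrow> complex. (\<Sum>i\<in>I. (cmod (v i))^2) \<le> 1}.
        sqrt (\<Sum>i\<in>I. (cmod (\<Sum>j\<in>I. M i j * v j))^2))"

text \<open>d x d block between unit cells j, j' of the infinite-lattice Fermi-sea projector,
  built from the Bloch projector Pk (internal states indexed by the finite type 'n).\<close>
definition Pinf_block :: "(real \<Rightarrow> 'n \<Rightarrow> 'n \<Rightarrow> complex) \<Rightarrow> int \<Rightarrow> int \<Rightarrow> 'n \<Rightarrow> 'n \<Rightarrow> complex" where
  "Pinf_block Pk j j' a b =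
     integral {-pi..pi} (\<lambda>k. exp (\<i> * of_real (k * of_int (j - j'))) * Pk k a b)
       / complex_of_real (2 * pi)"

text \<open>Same block for the periodic lattice of L unit cells.\<close>
definition PL_block :: "(real \<Rightarrow> 'n \<Rightarrow> 'n \<Rightarrow> complex) \<Rightarrow> nat \<Rightarrow> int \<Rightarrow> int \<Rightarrow> 'n \<Rightarrow> 'n \<Rightarrow> complex" where
  "PL_block Pk L j j' a b =
     (\<Sum>m\<in>{1..L}. let k = 2 * pi * real m / real L in
        exp (\<i> * of_real (k * of_int (j - j'))) * Pk k a b) / of_nat L"

end

theory Submission
  imports Defs "HOL-Analysis.Analysis"
begin
inductive trig :: "(real \<Rightarrow> complex) \<Rightarrow> bool" where
  trig_base: "trig (\<lambda>k. c * cis (k * of_int n))"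
| trig_add: "trig f \<Longrightarrow> trig g \<Longrightarrow> trig (\<lambda>k. f k + g k)"

lemma trig_const: "trig (\<lambda>k. c)"
  using trig_base[of c 0] by simp

lemma trig_base_mult: "trig g \<Longrightarrow> trig (\<lambda>k. (c * cis (k * of_int n)) * g k)"
proof (induction rule: trig.induct)
  case (trig_base d m)
  have "(\<lambda>k. c * cis (k * of_int n) * (d * cis (k * of_int m))) = (\<lambda>k. (c*d) * cis (k * of_int (n+m)))"
    by (auto simp: cis_mult algebra_simps)
  then show ?case by (metis trig.trig_base)
next
  case (trig_add f g)
  then show ?case by (simp add: distrib_left trig.trig_add)
qed

lemma trig_mult: "trig f \<Longrightarrow> trig g \<Longrightarrow> trig (\<lambda>k. f k * g k)"
proof (induction rule: trig.induct)
  case (trig_base c n)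
  then show ?case by (rule trig_base_mult)
next
  case (trig_add f1 f2)
  then show ?case by (simp add: distrib_right trig.trig_add)
qed

lemma trig_cont: "trig f \<Longrightarrow> continuous_on UNIV f"
  by (induction rule: trig.induct) (auto intro!: continuous_intros simp: cis_conv_exp)

lemma trig_integral:
  fixes h :: "real \<Rightarrow> complex"
  assumes "\<And>n::int. ((\<lambda>k. cis (k * of_int n) * h k) has_integral 0) {-pi..pi}"
  shows "trig q \<Longrightarrow> ((\<lambda>k. q k * h k) has_integral 0) {-pi..pi}"
proof (induction rule: trig.induct)
  case (trig_base c n)
  from has_integral_mult_right[OF assms[of n], of c] show ?case by (simp add: mult.assoc)
next
  case (trig_add f g)
  from has_integral_add[OF trig_add.IH] show ?case by (simp add: distrib_right)
qed

lemma poly_trig: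
  fixes f :: "complex \<Rightarrow> real"
  shows "real_polynomial_function f \<Longrightarrow> trig (\<lambda>k. complex_of_real (f (cis k)))"
proof (induction rule: real_polynomial_function.induct)
  case (linear f)
  then have lf: "linear f" by (rule bounded_linear.linear)
  have ck: "cis k = cos k *\<^sub>R 1 + sin k *\<^sub>R \<i>" for k
    by (simp add: complex_eq_iff)
  have "f (cis k) = cos k * f 1 + sin k * f \<i>" for k
    unfolding ck using lf by (simp add: linear_add linear_scale)
  hence "(\<lambda>k. complex_of_real (f (cis k))) =
     (\<lambda>k. (of_real (f 1)/2 + of_real (f \<i>)/(2*\<i>)) * cis (k * of_int 1) +
          (of_real (f 1)/2 - of_real (f \<i>)/(2*\<i>)) * cis (k * of_int (-1)))"
    by (auto simp: complex_eq_iff field_simps)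
  then show ?case by (simp only: ) (intro trig.trig_add trig.trig_base)
next
  case (const c)
  then show ?case by (rule trig_const)
next
  case (add f g)
  then show ?case by (simp add: trig.trig_add)
next
  case (mult f g)
  then show ?case by (simp add: trig_mult)
qed

lemma periodic_nat:
  assumes per: "\<And>k. h (k + 2*pi) = h k"
  shows "h (k + 2*pi* real n) = h k"
proof (induction n)
  case 0 then show ?case by simp
next
  case (Suc n)
  have "h (k + 2*pi* real (Suc n)) = h ((k + 2*pi* real n) + 2*pi)" by (simp add: algebra_simps)
  also have "\<dots> = h (k + 2*pi* real n)" by (rule per)
  finally show ?case using Suc by simp
qed

lemma periodic_int:
  assumes per: "\<And>k. h (k + 2*pi) = h k"
  shows "h (k + 2*pi* of_int m) = h k"
proof (cases "m \<ge> 0")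
  case True
  then obtain n where "m = int n" using nonneg_int_cases by blast
  then show ?thesis using periodic_nat[of h, OF per] by simp
next
  case False
  define n where "n = nat (-m)"
  have n: "m = - int n" using False by (simp add: n_def)
  have "h k = h ((k + 2*pi* of_int m) + 2*pi* real n)" by (simp add: n)
  also have "\<dots> = h (k + 2*pi* of_int m)" by (rule periodic_nat[of h, OF per])
  finally show ?thesis by simp
qed

lemma cis_eq_periodic:
  assumes per: "\<And>k. h (k + 2*pi) = h k" and eq: "exp (\<i> * of_real a) = exp (\<i> * of_real b)"
  shows "h a = h b"
proof -
  from eq obtain n :: int where n: "\<i> * of_real a = \<i> * of_real b + (of_int (2 * n) * pi) * \<i>"
    by (auto simp: exp_eq)
  then have "a = b + 2*pi* of_int n"
    by (auto simp: complex_eq_iff)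
  then show ?thesis using periodic_int[of h, OF per] by simp
qed

lemma h_Arg_Arg2pi:
  assumes per: "\<And>k. h (k + 2*pi) = h k" and z: "z \<noteq> 0"
  shows "h (Arg z) = h (Arg2pi z)"
proof (rule cis_eq_periodic[of h, OF per])
  have "is_Arg z (Arg z)" using z by (rule is_Arg_Arg)
  moreover have "is_Arg z (Arg2pi z)" using Arg2pi by blast
  ultimately show "exp (\<i> * of_real (Arg z)) = exp (\<i> * of_real (Arg2pi z))"
    using z unfolding is_Arg_def by (metis mult_cancel_left norm_eq_zero of_real_eq_0_iff)
qed

lemma h_Arg_cis:
  assumes per: "\<And>k. h (k + 2*pi) = h k"
  shows "h (Arg (cis k)) = h k"
proof (rule cis_eq_periodic[of h, OF per])
  have "is_Arg (cis k) (Arg (cis k))" by (rule is_Arg_Arg) simp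
  then show "exp (\<i> * of_real (Arg (cis k))) = exp (\<i> * of_real k)"
    unfolding is_Arg_def by (simp add: cis_conv_exp)
qed

lemma cont_h_Arg:
  fixes h :: "real \<Rightarrow> 'a::topological_space"
  assumes cont: "continuous_on UNIV h" and per: "\<And>k. h (k + 2*pi) = h k"
  shows "continuous_on (sphere 0 1) (\<lambda>z. h (Arg z))"
proof (rule continuous_on_eq_continuous_within[THEN iffD2], intro ballI)
  fix z :: complex assume z: "z \<in> sphere 0 1"
  have hc: "isCont h x" for x using cont by (simp add: continuous_on_eq_continuous_at)
  show "continuous (at z within sphere 0 1) (\<lambda>z. h (Arg z))"
  proof (cases "z \<in> \<real>\<^sub>\<le>\<^sub>0")
    case False
    show ?thesis
      by (rule continuous_within_compose3[OF hc continuous_within_Arg[OF False]])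
  next
    case True
    have "z \<noteq> 0" using z by auto
    then have nn: "z \<notin> \<real>\<^sub>\<ge>\<^sub>0" using True
      unfolding complex_nonpos_Reals_iff complex_nonneg_Reals_iff by (simp add: complex_eq_iff)
    have c2: "continuous (at z within sphere 0 1) (\<lambda>z. h (Arg2pi z))"
      by (rule continuous_within_compose3[OF hc continuous_at_imp_continuous_within[OF continuous_at_Arg2pi[OF nn]]])
    show ?thesis
    proof (rule continuous_transform_within[OF c2, of 1])
      fix x' assume "x' \<in> sphere (0::complex) 1"
      then have "x' \<noteq> 0" by auto
      then show "h (Arg2pi x') = h (Arg x')" using h_Arg_Arg2pi[of h, OF per] by simp
    next
      show "z \<in> sphere 0 1" using z .
    qed simp
  qed
qed

lemma fourier_zero:
  fixes h :: "real \<Rightarrow> complex"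
  assumes cont: "continuous_on UNIV h" and per: "\<And>k. h (k + 2*pi) = h k"
    and zero: "\<And>n::int. ((\<lambda>k. cis (k * of_int n) * h k) has_integral 0) {-pi..pi}"
  shows "h x = 0"
proof -
  have contI: "continuous_on {-pi..pi} h" using cont by (rule continuous_on_subset) simp
  have "compact (h ` {-pi..pi})" by (rule compact_continuous_image[OF contI]) simp
  then obtain M where M: "M > 0" "\<And>k. k \<in> {-pi..pi} \<Longrightarrow> norm (h k) \<le> M"
    using compact_imp_bounded bounded_pos by (metis image_eqI)
  define F where "F = (\<lambda>k. h k * cnj (h k))"
  have Fc: "continuous_on {-pi..pi} F" unfolding F_def by (intro continuous_intros contI)
  then have "F integrable_on {-pi..pi}" by (rule integrable_continuous_interval)
  then have FI: "(F has_integral integral {-pi..pi} F) {-pi..pi}" by (rule integrable_integral)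
  define I where "I = integral {-pi..pi} F"
  have perR: "\<And>k. Re (h (k + 2*pi)) = Re (h k)" and perI: "\<And>k. Im (h (k + 2*pi)) = Im (h k)"
    using per by auto
  have c1: "continuous_on (sphere 0 1) (\<lambda>z. Re (h (Arg z)))"
    using cont_h_Arg[of "\<lambda>k. Re (h k)", OF _ perR] cont by (auto intro: continuous_intros)
  have c2: "continuous_on (sphere 0 1) (\<lambda>z. Im (h (Arg z)))"
    using cont_h_Arg[of "\<lambda>k. Im (h k)", OF _ perI] cont by (auto intro: continuous_intros)
  have small: "norm I \<le> \<epsilon>" if eps: "\<epsilon> > 0" for \<epsilon>
  proof -
    define e where "e = \<epsilon> / (4 * pi * M)"
    have e: "e > 0" using eps M by (simp add: e_def)
    obtain g1 where g1: "real_polynomial_function g1" "\<And>z. z \<in> sphere 0 1 \<Longrightarrow> \<bar>Re (h (Arg z)) - g1 z\<bar> < e"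
      using Stone_Weierstrass_real_polynomial_function[OF compact_sphere c1 e] by blast
    obtain g2 where g2: "real_polynomial_function g2" "\<And>z. z \<in> sphere 0 1 \<Longrightarrow> \<bar>Im (h (Arg z)) - g2 z\<bar> < e"
      using Stone_Weierstrass_real_polynomial_function[OF compact_sphere c2 e] by blast
    define q where "q = (\<lambda>k. complex_of_real (g1 (cis k)) + (- \<i>) * complex_of_real (g2 (cis k)))"
    have "trig q" unfolding q_def
      by (intro trig_add trig_mult trig_const poly_trig g1(1) g2(1))
    then have qi: "((\<lambda>k. q k * h k) has_integral 0) {-pi..pi}"
      by (rule trig_integral[OF zero])
    have "((\<lambda>k. F k - q k * h k) has_integral (I - 0)) {-pi..pi}"
      using has_integral_diff[OF FI qi] by (simp add: I_def)
    then have hi: "((\<lambda>k. h k * (cnj (h k) - q k)) has_integral I) {-pi..pi}"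
      by (simp add: F_def algebra_simps)
    have bnd: "norm (h k * (cnj (h k) - q k)) \<le> M * (2 * e)" if k: "k \<in> cbox (-pi) pi" for k
    proof -
      have cs: "cis k \<in> sphere 0 1" by simp
      have a1: "\<bar>Re (h k) - g1 (cis k)\<bar> < e" using g1(2)[OF cs] h_Arg_cis[of "\<lambda>k. Re (h k)", OF perR] by simp
      have a2: "\<bar>Im (h k) - g2 (cis k)\<bar> < e" using g2(2)[OF cs] h_Arg_cis[of "\<lambda>k. Im (h k)", OF perI] by simp
      have "cnj (h k) - q k = complex_of_real (Re (h k) - g1 (cis k)) - \<i> * complex_of_real (Im (h k) - g2 (cis k))"
        by (simp add: q_def complex_eq_iff)
      also have "norm \<dots> \<le> \<bar>Re (h k) - g1 (cis k)\<bar> + \<bar>Im (h k) - g2 (cis k)\<bar>"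
        by (rule order_trans[OF norm_triangle_ineq4]) (simp add: norm_mult del: of_real_diff flip: of_real_diff)
      finally have "norm (cnj (h k) - q k) \<le> 2 * e" using a1 a2 by simp
      moreover have "norm (h k) \<le> M" using M(2) k by simp
      ultimately show ?thesis unfolding norm_mult using M(1) by (intro mult_mono) auto
    qed
    have "norm I \<le> M * (2 * e) * Henstock_Kurzweil_Integration.content (cbox (-pi) pi)"
      by (rule has_integral_bound[OF _ hi[unfolded interval_cbox] bnd]) (use M e in auto)
    also have "\<dots> = \<epsilon>" using M pi_gt_zero by (simp add: e_def field_simps)
    finally show ?thesis .
  qed
  have I0: "I = 0"
  proof (rule ccontr)
    assume "I \<noteq> 0"
    then have "norm I > 0" by simp
    from small[OF half_gt_zero[OF this]] this show False by simp
  qed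
  have "((Re \<circ> F) has_integral Re I) {-pi..pi}"
    by (rule has_integral_linear[OF FI[folded I_def] bounded_linear_Re])
  moreover have "Re \<circ> F = (\<lambda>k. (cmod (h k))\<^sup>2)"
    by (simp add: o_def F_def complex_mult_cnj cmod_power2)
  ultimately have RI: "((\<lambda>k. (cmod (h k))\<^sup>2) has_integral 0) (cbox (-pi) pi)"
    using I0 by simp
  have zero_on: "h k = 0" if k: "k \<in> {-pi..pi}" for k
  proof -
    have "(cmod (h k))\<^sup>2 = 0"
    proof (rule has_integral_0_cbox_imp_0[OF _ _ RI])
      show "continuous_on (cbox (-pi) pi) (\<lambda>k. (cmod (h k))\<^sup>2)"
        using contI by (auto intro!: continuous_intros)
      show "box (-pi) pi \<noteq> {}" using pi_gt_zero by (simp add: box_real not_le)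
      show "k \<in> cbox (-pi) pi" using k by simp
    qed simp
    then show ?thesis by simp
  qed
  define m where "m = \<lfloor>(x + pi) / (2*pi)\<rfloor>"
  define x0 where "x0 = x - 2 * pi * of_int m"
  have pp: "2*pi > 0" using pi_gt_zero by simp
  have "of_int m \<le> (x + pi) / (2*pi)" "(x + pi) / (2*pi) < of_int m + 1"
    unfolding m_def by linarith+
  then have A: "of_int m * (2*pi) \<le> x + pi" and B: "x + pi < (of_int m + 1) * (2*pi)"
    using pos_le_divide_eq[OF pp] pos_divide_less_eq[OF pp] by blast+
  have "x0 \<in> {-pi..pi}" unfolding x0_def using A B by (simp add: algebra_simps)
  then have "h x0 = 0" by (rule zero_on)
  moreover have "h x = h (x0 + 2 * pi * of_int m)" by (simp add: x0_def)
  ultimately show ?thesis using periodic_int[of h, OF per] by simp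
qed

lemma cis_scaleR: "exp (k *\<^sub>R (\<i> * of_int m)) = cis (k * of_int m)"
  by (simp add: cis_conv_exp scaleR_conv_of_real algebra_simps)

lemma cis_periodic_int: "cis (a + 2 * pi * of_int n) = cis a"
proof -
  have "cis (a + 2 * pi * of_int n) = cis a * cis (2 * pi * of_int n)" by (simp only: cis_mult)
  also have "\<dots> = cis a" by (subst cis_multiple_2pi) simp_all
  finally show ?thesis .
qed

lemma cis_int_integral:
  "((\<lambda>k. cis (k * of_int m)) has_integral (if m = 0 then complex_of_real (2*pi) else 0)) {-pi..pi}"
proof (cases "m = 0")
  case True
  have "((\<lambda>k. (1::complex)) has_integral (Henstock_Kurzweil_Integration.content {-pi..pi} *\<^sub>R 1)) {-pi..pi}"
    by (rule has_integral_const_real)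
  then show ?thesis using True pi_gt_zero by (simp add: scaleR_conv_of_real)
next
  case False
  define z where "z = \<i> * (of_int m :: complex)"
  have z: "z \<noteq> 0" using False by (simp add: z_def)
  have d: "((\<lambda>k. exp (k *\<^sub>R z) * inverse z) has_vector_derivative (exp (x *\<^sub>R z) * z * inverse z)) (at x within {-pi..pi})" for x
    by (intro has_vector_derivative_mult_left exp_scaleR_has_vector_derivative_right)
  have "((\<lambda>x. exp (x *\<^sub>R z) * z * inverse z) has_integral
        (exp (pi *\<^sub>R z) * inverse z - exp ((-pi) *\<^sub>R z) * inverse z)) {-pi..pi}"
    by (rule fundamental_theorem_of_calculus[OF _ d]) (use pi_gt_zero in simp)
  moreover have "(\<lambda>x. exp (x *\<^sub>R z) * z * inverse z) = (\<lambda>k. cis (k * of_int m))"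
  proof -
    have "exp (x *\<^sub>R z) * z * inverse z = exp (x *\<^sub>R z)" for x using z by (simp add: mult.assoc)
    then show ?thesis by (simp add: z_def cis_scaleR)
  qed
  moreover have "exp (pi *\<^sub>R z) = exp ((-pi) *\<^sub>R z)"
  proof -
    have "cis ((-pi) * of_int m) = cis (pi * of_int m + 2 * pi * of_int (-m))" by simp
    also have "\<dots> = cis (pi * of_int m)" by (rule cis_periodic_int)
    finally show ?thesis unfolding z_def cis_scaleR by simp
  qed
  ultimately show ?thesis using False by simp
qed

lemma fourier_inversion:
  fixes p :: "real \<Rightarrow> complex" and c :: "int \<Rightarrow> complex"
  assumes cont: "continuous_on UNIV p" and per: "\<And>k. p (k + 2*pi) = p k"
    and cdef: "\<And>s. c s = integral {-pi..pi} (\<lambda>k. cis (k * of_int s) * p k) / of_real (2*pi)"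
    and summ: "(\<lambda>s. norm (c s)) summable_on UNIV"
  shows "((\<lambda>s. c s * cis (- (k * of_int s))) has_sum p k) UNIV"
proof -
  define f where "f = (\<lambda>s k. c s * cis (- (k * of_int s)))"
  define G where "G = (\<lambda>k. infsum (\<lambda>s. f s k) UNIV)"
  have nf: "norm (f s k) = norm (c s)" for s k by (simp add: f_def norm_mult)
  have fs: "(\<lambda>s. f s k) summable_on UNIV" for k
    by (rule abs_summable_summable) (simp add: nf summ)
  have UL: "uniform_limit UNIV (\<lambda>X k. \<Sum>s\<in>X. f s k) G (finite_subsets_at_top UNIV)"
    unfolding G_def by (rule Weierstrass_m_test_general[OF _ summ]) (simp add: nf)
  have fc: "continuous_on UNIV (f s)" for s
    unfolding f_def cis_conv_exp by (intro continuous_intros)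
  have Gc: "continuous_on UNIV G"
    by (rule uniform_limit_theorem[OF _ UL]) (auto intro!: always_eventually continuous_intros fc)
  have Gper: "G (k + 2*pi) = G k" for k
  proof -
    have "f s (k + 2*pi) = f s k" for s
    proof -
      have "- ((k + 2 * pi) * of_int s) = - (k * of_int s) + 2 * pi * of_int (-s)" by (simp add: algebra_simps)
      then show ?thesis unfolding f_def by (simp only: cis_periodic_int)
    qed
    then show ?thesis by (simp add: G_def)
  qed
  have Gint: "((\<lambda>k. cis (k * of_int t) * G k) has_integral (of_real (2*pi) * c t)) {-pi..pi}" for t
  proof -
    define g where "g = (\<lambda>s k. cis (k * of_int t) * f s k)"
    have ng: "norm (g s k) = norm (c s)" for s k by (simp add: g_def nf norm_mult)
    have gsum: "infsum (\<lambda>s. g s k) UNIV = cis (k * of_int t) * G k" for k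
      unfolding g_def G_def by (rule infsum_cmult_right') 
    have UL2: "uniform_limit {-pi..pi} (\<lambda>X k. \<Sum>s\<in>X. g s k) (\<lambda>k. cis (k * of_int t) * G k) (finite_subsets_at_top UNIV)"
      using Weierstrass_m_test_general[of UNIV "{-pi..pi}" g "\<lambda>s. norm (c s)", OF _ summ]
      by (simp add: ng gsum)
    have gc: "continuous_on {-pi..pi} (\<lambda>k. \<Sum>s\<in>X. g s k)" for X
      unfolding g_def by (intro continuous_intros continuous_on_subset[OF fc]) (auto simp: cis_conv_exp intro!: continuous_intros)
    obtain I J where IJ: "\<And>X. ((\<lambda>k. \<Sum>s\<in>X. g s k) has_integral I X) {-pi..pi}"
      "((\<lambda>k. cis (k * of_int t) * G k) has_integral J) {-pi..pi}" "(I \<longlongrightarrow> J) (finite_subsets_at_top UNIV)"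
      using uniform_limit_integral[OF UL2 gc finite_subsets_at_top_neq_bot] by blast
    have gint: "((\<lambda>k. g s k) has_integral (if s = t then of_real (2*pi) * c t else 0)) {-pi..pi}" for s
    proof -
      have "g s k = c s * cis (k * of_int (t - s))" for k
        by (simp add: g_def f_def cis_mult algebra_simps)
      then show ?thesis using has_integral_mult_right[OF cis_int_integral[of "t - s"], of "c s"]
        by (auto simp: mult.commute)
    qed
    have "eventually (\<lambda>X. I X = of_real (2*pi) * c t) (finite_subsets_at_top UNIV)"
      unfolding eventually_finite_subsets_at_top
    proof (intro exI[of _ "{t}"] conjI allI impI)
      fix X :: "int set" assume X: "finite X \<and> {t} \<subseteq> X \<and> X \<subseteq> UNIV"
      have "((\<lambda>k. \<Sum>s\<in>X. g s k) has_integral (\<Sum>s\<in>X. if s = t then of_real (2*pi) * c t else 0)) {-pi..pi}"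
        by (rule has_integral_sum) (use X gint in auto)
      moreover have "(\<Sum>s\<in>X. if s = t then of_real (2*pi) * c t else 0) = of_real (2*pi) * c t"
        using X by (simp add: sum.delta)
      ultimately show "I X = of_real (2*pi) * c t" using IJ(1) has_integral_unique by metis
    qed auto
    then have "(I \<longlongrightarrow> of_real (2*pi) * c t) (finite_subsets_at_top UNIV)"
      by (rule tendsto_eventually)
    then have "J = of_real (2*pi) * c t"
      using IJ(3) tendsto_unique finite_subsets_at_top_neq_bot by blast
    then show ?thesis using IJ(2) by simp
  qed
  have pint: "((\<lambda>k. cis (k * of_int t) * p k) has_integral (of_real (2*pi) * c t)) {-pi..pi}" for t
  proof -
    have "continuous_on {-pi..pi} (\<lambda>k. cis (k * of_int t) * p k)"
      by (intro continuous_intros continuous_on_subset[OF cont]) (auto simp: cis_conv_exp intro!: continuous_intros)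
    then have "(\<lambda>k. cis (k * of_int t) * p k) integrable_on {-pi..pi}"
      by (rule integrable_continuous_interval)
    then show ?thesis using cdef[of t] pi_gt_zero by (simp add: has_integral_integral)
  qed
  have "p k - G k = 0"
  proof (rule fourier_zero[of "\<lambda>k. p k - G k"])
    show "continuous_on UNIV (\<lambda>k. p k - G k)" by (intro continuous_intros cont Gc)
    show "p (k + 2 * pi) - G (k + 2 * pi) = p k - G k" for k by (simp add: per Gper)
    show "((\<lambda>k. cis (k * of_int n) * (p k - G k)) has_integral 0) {-pi..pi}" for n
      using has_integral_diff[OF pint Gint, of n n] by (simp add: algebra_simps)
  qed
  then have "p k = G k" by simp
  then show ?thesis using fs[of k] unfolding G_def f_def by (simp add: has_sum_infsum)
qed

lemma has_sum_finsum:
  fixes f :: "'i \<Rightarrow> 'a \<Rightarrow> 'b::topological_comm_monoid_add"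
  assumes "finite I" "\<And>i. i \<in> I \<Longrightarrow> (f i has_sum s i) A"
  shows "((\<lambda>x. \<Sum>i\<in>I. f i x) has_sum (\<Sum>i\<in>I. s i)) A"
  using assms
proof (induction I rule: finite_induct)
  case empty then show ?case by simp
next
  case (insert i I)
  then show ?case by (simp add: has_sum_add)
qed

lemma geom_int_sum:
  fixes \<kappa> L r :: real
  assumes k: "\<kappa> > 0" and L: "L > 0" and r: "\<bar>r\<bar> < L"
  shows "((\<lambda>n::int. exp (- \<kappa> * \<bar>r + of_int n * L\<bar>)) has_sum
           ((exp (- \<kappa> * r) + exp (\<kappa> * r)) / (exp (\<kappa> * L) - 1))) (UNIV - {0})"
proof -
  define z where "z = exp (- \<kappa> * L)"
  have z0: "0 < z" and z1: "z < 1" using k L by (auto simp: z_def)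
  have zz: "z / (1 - z) = 1 / (exp (\<kappa> * L) - 1)"
  proof -
    have e: "z = 1 / exp (\<kappa> * L)" by (simp add: z_def exp_minus field_simps)
    have "exp (\<kappa> * L) > 1" using k L by simp
    then show ?thesis unfolding e by (simp add: field_simps)
  qed
  have g: "((\<lambda>n. z ^ n) has_sum (z / (1 - z))) {1..}"
    using has_sum_geometric_from_1[of z] z0 z1 by simp
  have pos: "((\<lambda>n::nat. exp (- \<kappa> * \<bar>r + of_int (int n) * L\<bar>)) has_sum (exp (- \<kappa> * r) * (z / (1 - z)))) {1..}"
  proof -
    have "((\<lambda>n. exp (- \<kappa> * r) * z ^ n) has_sum (exp (- \<kappa> * r) * (z / (1 - z)))) {1..}"
      by (rule has_sum_cmult_right[OF g])
    moreover have "exp (- \<kappa> * \<bar>r + of_int (int n) * L\<bar>) = exp (- \<kappa> * r) * z ^ n" if "n \<in> {1..}" for n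
    proof -
      have "real n \<ge> 1" using that by simp
      then have "r + real n * L \<ge> 0" using r L by (smt (verit, ccfv_SIG) mult_le_cancel_right1)
      then have "\<bar>r + of_int (int n) * L\<bar> = r + real n * L" by simp
      then show ?thesis by (simp add: z_def algebra_simps flip: exp_add exp_of_nat_mult)
    qed
    ultimately show ?thesis by (subst has_sum_cong[where g="\<lambda>n. exp (- \<kappa> * r) * z ^ n"]) auto
  qed
  have neg: "((\<lambda>n::nat. exp (- \<kappa> * \<bar>r + of_int (- int n) * L\<bar>)) has_sum (exp (\<kappa> * r) * (z / (1 - z)))) {1..}"
  proof -
    have "((\<lambda>n. exp (\<kappa> * r) * z ^ n) has_sum (exp (\<kappa> * r) * (z / (1 - z)))) {1..}"
      by (rule has_sum_cmult_right[OF g])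
    moreover have "exp (- \<kappa> * \<bar>r + of_int (- int n) * L\<bar>) = exp (\<kappa> * r) * z ^ n" if "n \<in> {1..}" for n
    proof -
      have "real n \<ge> 1" using that by simp
      then have "r - real n * L \<le> 0" using r L by (smt (verit, ccfv_SIG) mult_le_cancel_right1)
      then have "\<bar>r + of_int (- int n) * L\<bar> = real n * L - r" by simp
      then show ?thesis by (simp add: z_def algebra_simps flip: exp_add exp_of_nat_mult)
    qed
    ultimately show ?thesis by (subst has_sum_cong[where g="\<lambda>n. exp (\<kappa> * r) * z ^ n"]) auto
  qed
  define F where "F = (\<lambda>n::int. exp (- \<kappa> * \<bar>r + of_int n * L\<bar>))"
  have p2: "(F has_sum (exp (- \<kappa> * r) * (z / (1 - z)))) (int ` {1..})"
    using pos by (subst has_sum_reindex) (auto simp: inj_on_def F_def o_def)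
  have n2: "(F has_sum (exp (\<kappa> * r) * (z / (1 - z)))) ((\<lambda>n. - int n) ` {1..})"
    using neg by (subst has_sum_reindex) (auto simp: inj_on_def F_def o_def)
  have U: "UNIV - {0} = int ` {1..} \<union> (\<lambda>n. - int n) ` {1..}"
  proof (intro set_eqI iffI)
    fix x :: int assume "x \<in> UNIV - {0}"
    then show "x \<in> int ` {1..} \<union> (\<lambda>n. - int n) ` {1..}"
    proof (cases "x > 0")
      case True then show ?thesis by (auto intro!: image_eqI[of x int "nat x"])
    next
      case False then have "x < 0" using \<open>x \<in> UNIV - {0}\<close> by auto
      then show ?thesis by (auto intro!: image_eqI[of x _ "nat (-x)"])
    qed
  qed auto
  have "(F has_sum (exp (- \<kappa> * r) * (z / (1 - z)) + exp (\<kappa> * r) * (z / (1 - z)))) (UNIV - {0})"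
    unfolding U by (rule has_sum_Un_disjoint[OF p2 n2]) auto
  moreover have "exp (- \<kappa> * r) * (z / (1 - z)) + exp (\<kappa> * r) * (z / (1 - z)) =
      (exp (- \<kappa> * r) + exp (\<kappa> * r)) / (exp (\<kappa> * L) - 1)"
    unfolding zz by (simp add: add_divide_distrib)
  ultimately show ?thesis unfolding F_def by simp
qed

lemma exp_abs_summable:
  fixes \<kappa> :: real assumes k: "\<kappa> > 0"
  shows "(\<lambda>s::int. exp (- \<kappa> * \<bar>real_of_int s\<bar>)) summable_on UNIV"
proof -
  have "(\<lambda>s::int. exp (- \<kappa> * \<bar>real_of_int s\<bar>)) summable_on (UNIV - {0})"
    using geom_int_sum[OF k, of 1 0] by (auto intro: has_sum_imp_summable)
  then have "(\<lambda>s::int. exp (- \<kappa> * \<bar>real_of_int s\<bar>)) summable_on (insert 0 (UNIV - {0}))"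
    by (rule summable_on_insert_iff[THEN iffD2])
  then show ?thesis by (simp add: insert_Diff_single)
qed

lemma roots_sum:
  fixes L :: nat and t :: int
  assumes L: "L > 0"
  shows "(\<Sum>m\<in>{1..L}. cis (2 * pi * real m / real L * of_int t)) = (if int L dvd t then of_nat L else 0)"
proof (cases "int L dvd t")
  case True
  then obtain q where q: "t = int L * q" by blast
  have "cis (2 * pi * real m / real L * of_int t) = 1" for m
  proof -
    have "2 * pi * real m / real L * of_int t = 2 * pi * of_int (int m * q)" using L by (simp add: q field_simps)
    then show ?thesis by simp
  qed
  then show ?thesis using True by simp
next
  case False
  define w where "w = cis (2 * pi * of_int t / real L)"
  have pw: "cis (2 * pi * real m / real L * of_int t) = w ^ m" for m
    unfolding w_def Complex.DeMoivre by (simp add: field_simps)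
  have w1: "w \<noteq> 1"
  proof
    assume "w = 1"
    then have "exp (\<i> * of_real (2 * pi * of_int t / real L)) = 1" by (simp add: w_def cis_conv_exp)
    then obtain n :: int where "2 * pi * of_int t / real L = 2 * pi * of_int n"
      by (auto simp: exp_eq_1)
    then have "of_int t = real L * of_int n" using L by (simp add: field_simps)
    then have "t = int L * n" by (metis of_int_eq_iff of_int_mult of_int_of_nat_eq)
    then show False using False by simp
  qed
  have wL: "w ^ L = 1"
  proof -
    have "real L * (2 * pi * of_int t / real L) = 2 * pi * of_int t" using L by simp
    then show ?thesis unfolding w_def Complex.DeMoivre by (metis Ints_of_int cis_multiple_2pi)
  qed
  have "(\<Sum>m\<in>{1..L}. w ^ m) = (\<Sum>i<L. w ^ Suc i)"
    by (simp add: sum.atLeast1_atMost_eq)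
  also have "\<dots> = w * (\<Sum>i<L. w ^ i)" by (simp add: sum_distrib_left)
  also have "\<dots> = 0" using w1 wL by (simp add: geometric_sum)
  finally have "(\<Sum>m\<in>{1..L}. w ^ m) = 0" .
  moreover have "(\<Sum>m\<in>{1..L}. cis (2 * pi * real m / real L * of_int t)) = (\<Sum>m\<in>{1..L}. w ^ m)"
    by (intro sum.cong refl pw)
  ultimately show ?thesis using False by simp
qed

lemma sinh_superadd:
  fixes a b :: real assumes "a \<ge> 0" "b \<ge> 0"
  shows "sinh a + sinh b \<le> sinh (a + b)"
proof -
  have "sinh a \<ge> 0" "sinh b \<ge> 0" "cosh a \<ge> 1" "cosh b \<ge> 1" using assms by (auto simp: cosh_real_ge_1)
  then have "sinh a \<le> sinh a * cosh b" "sinh b \<le> cosh a * sinh b"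
    by (auto intro: mult_le_cancel_left1[THEN iffD2] mult_le_cancel_right1[THEN iffD2])
  then show ?thesis by (simp add: sinh_add)
qed

lemma cosh_row_identity:
  fixes \<kappa> :: real and j :: int
  shows "sinh \<kappa> * (\<Sum>j'\<in>{1..int l}. cosh (\<kappa> * of_int (j - j'))) =
     (sinh (\<kappa> * j) + sinh (\<kappa> * (j - 1)) - sinh (\<kappa> * (j - l)) - sinh (\<kappa> * (j - l - 1))) / 2"
proof (induction l)
  case 0 then show ?case by simp
next
  case (Suc l)
  have s: "{1..int (Suc l)} = insert (int l + 1) {1..int l}" by auto
  have "sinh \<kappa> * cosh (\<kappa> * of_int (j - (int l + 1))) =
      (sinh (\<kappa> * (j - l)) - sinh (\<kappa> * (j - l - 2))) / 2"
  proof -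
    have a: "\<kappa> * (j - l) = \<kappa> * of_int (j - (int l + 1)) + \<kappa>" by (simp add: algebra_simps)
    have b: "\<kappa> * (j - l - 2) = \<kappa> * of_int (j - (int l + 1)) - \<kappa>" by (simp add: algebra_simps)
    show ?thesis unfolding a b sinh_add sinh_diff by (simp add: algebra_simps)
  qed
  then show ?case unfolding s using Suc by (simp add: algebra_simps)
qed

lemma cosh_row_bound:
  fixes \<kappa> :: real and j :: int
  assumes k: "\<kappa> > 0" and j: "1 \<le> j" "j \<le> int l"
  shows "(\<Sum>j'\<in>{1..int l}. cosh (\<kappa> * of_int (j - j'))) \<le> sinh (\<kappa> * l) / sinh \<kappa>"
proof -
  have sk: "sinh \<kappa> > 0" using k by simp
  have A: "sinh (\<kappa> * of_int j) + sinh (\<kappa> * of_int (int l - j)) \<le> sinh (\<kappa> * real l)"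
  proof -
    have x: "\<kappa> * of_int j \<ge> 0" "\<kappa> * of_int (int l - j) \<ge> 0" using k j by auto
    have e: "\<kappa> * of_int j + \<kappa> * of_int (int l - j) = \<kappa> * real l" by (simp add: algebra_simps)
    show ?thesis using sinh_superadd[OF x] unfolding e .
  qed
  have B: "sinh (\<kappa> * of_int (j - 1)) + sinh (\<kappa> * of_int (int l - j + 1)) \<le> sinh (\<kappa> * real l)"
  proof -
    have x: "\<kappa> * of_int (j - 1) \<ge> 0" "\<kappa> * of_int (int l - j + 1) \<ge> 0" using k j by auto
    have e: "\<kappa> * of_int (j - 1) + \<kappa> * of_int (int l - j + 1) = \<kappa> * real l" by (simp add: algebra_simps)
    show ?thesis using sinh_superadd[OF x] unfolding e .
  qed
  have C: "sinh (\<kappa> * of_int (j - int l)) = - sinh (\<kappa> * of_int (int l - j))"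
    by (metis minus_diff_eq mult_minus_right sinh_minus of_int_minus)
  have D: "sinh (\<kappa> * of_int (j - int l - 1)) = - sinh (\<kappa> * of_int (int l - j + 1))"
  proof -
    have "\<kappa> * of_int (j - int l - 1) = - (\<kappa> * of_int (int l - j + 1))" by (simp add: algebra_simps)
    then show ?thesis by simp
  qed
  have "sinh \<kappa> * (\<Sum>j'\<in>{1..int l}. cosh (\<kappa> * of_int (j - j'))) \<le> sinh (\<kappa> * l)"
    unfolding cosh_row_identity C D using A B by simp
  then show ?thesis using sk by (simp add: field_simps)
qed

lemma schur:
  fixes a :: "'i \<Rightarrow> 'i \<Rightarrow> real" and t :: "'i \<Rightarrow> real"
  assumes S: "finite S" and a0: "\<And>i j. i \<in> S \<Longrightarrow> j \<in> S \<Longrightarrow> a i j \<ge> 0"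
    and t0: "\<And>j. j \<in> S \<Longrightarrow> t j \<ge> 0"
    and row: "\<And>i. i \<in> S \<Longrightarrow> (\<Sum>j\<in>S. a i j) \<le> R"
    and col: "\<And>j. j \<in> S \<Longrightarrow> (\<Sum>i\<in>S. a i j) \<le> R"
  shows "(\<Sum>i\<in>S. (\<Sum>j\<in>S. a i j * t j)\<^sup>2) \<le> R\<^sup>2 * (\<Sum>j\<in>S. (t j)\<^sup>2)"
proof -
  have step: "(\<Sum>j\<in>S. a i j * t j)\<^sup>2 \<le> R * (\<Sum>j\<in>S. a i j * (t j)\<^sup>2)" if i: "i \<in> S" for i
  proof -
    have "(\<Sum>j\<in>S. a i j * t j) = (\<Sum>j\<in>S. sqrt (a i j) * (sqrt (a i j) * t j))"
      by (rule sum.cong) (use a0 i in \<open>auto simp: mult.assoc[symmetric]\<close>)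
    then have "(\<Sum>j\<in>S. a i j * t j)\<^sup>2 \<le> (\<Sum>j\<in>S. (sqrt (a i j))\<^sup>2) * (\<Sum>j\<in>S. (sqrt (a i j) * t j)\<^sup>2)"
      using Cauchy_Schwarz_ineq_sum by metis
    also have "\<dots> = (\<Sum>j\<in>S. a i j) * (\<Sum>j\<in>S. a i j * (t j)\<^sup>2)"
      using a0 i by (simp add: power_mult_distrib)
    also have "\<dots> \<le> R * (\<Sum>j\<in>S. a i j * (t j)\<^sup>2)"
      by (rule mult_right_mono[OF row[OF i]]) (use a0 i in \<open>auto intro: sum_nonneg\<close>)
    finally show ?thesis .
  qed
  have R0: "R \<ge> 0" if ne: "S \<noteq> {}"
  proof -
    obtain i where "i \<in> S" using ne by blast
    then show ?thesis using row[of i] a0 by (meson order_trans sum_nonneg)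
  qed
  show ?thesis
  proof (cases "S = {}")
    case True then show ?thesis by simp
  next
    case False
    have "(\<Sum>i\<in>S. (\<Sum>j\<in>S. a i j * t j)\<^sup>2) \<le> (\<Sum>i\<in>S. R * (\<Sum>j\<in>S. a i j * (t j)\<^sup>2))"
      by (rule sum_mono) (rule step)
    also have "\<dots> = R * (\<Sum>i\<in>S. \<Sum>j\<in>S. a i j * (t j)\<^sup>2)"
      by (simp add: sum_distrib_left)
    also have "\<dots> = R * (\<Sum>j\<in>S. \<Sum>i\<in>S. a i j * (t j)\<^sup>2)"
      by (subst sum.swap) (rule refl)
    also have "\<dots> = R * (\<Sum>j\<in>S. (\<Sum>i\<in>S. a i j) * (t j)\<^sup>2)"
      by (simp add: sum_distrib_right)
    also have "\<dots> \<le> R * (\<Sum>j\<in>S. R * (t j)\<^sup>2)"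
      by (intro mult_left_mono sum_mono mult_right_mono col R0 False) auto
    also have "\<dots> = R\<^sup>2 * (\<Sum>j\<in>S. (t j)\<^sup>2)"
      by (simp add: sum_distrib_left power2_eq_square mult.assoc)
    finally show ?thesis .
  qed
qed

definition app :: "('n::finite \<Rightarrow> 'n \<Rightarrow> complex) \<Rightarrow> complex^'n \<Rightarrow> complex^'n" where
  "app M x = (\<chi> a. \<Sum>b\<in>UNIV. M a b * x$b)"

lemma sum_cart: "finite A \<Longrightarrow> finite B \<Longrightarrow> (\<Sum>i\<in>A\<times>B. F i) = (\<Sum>x\<in>A. \<Sum>y\<in>B. F (x,y))"
  by (simp add: sum.cartesian_product)

lemma norm_vec_sq: "(norm (x::complex^'n))\<^sup>2 = (\<Sum>a\<in>UNIV. (cmod (x$a))\<^sup>2)"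
  by (simp add: norm_vec_def L2_set_def sum_nonneg)

lemma opnorm_bdd:
  fixes M :: "'n::finite \<Rightarrow> 'n \<Rightarrow> complex"
  shows "bdd_above ((\<lambda>v. sqrt (\<Sum>i\<in>UNIV. (cmod (\<Sum>j\<in>UNIV. M i j * v j))\<^sup>2)) `
           {v. (\<Sum>i\<in>UNIV. (cmod (v i))\<^sup>2) \<le> 1})"
proof (rule bdd_aboveI2)
  fix v :: "'n \<Rightarrow> complex" assume "v \<in> {v. (\<Sum>i\<in>UNIV. (cmod (v i))\<^sup>2) \<le> 1}"
  then have v: "(\<Sum>i\<in>UNIV. (cmod (v i))\<^sup>2) \<le> 1" by simp
  have v1: "cmod (v j) \<le> 1" for j
  proof -
    have "(cmod (v j))\<^sup>2 \<le> (\<Sum>i\<in>UNIV. (cmod (v i))\<^sup>2)" by (rule member_le_sum) auto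
    then have "(cmod (v j))\<^sup>2 \<le> 1" using v by linarith
    then show ?thesis using power2_le_imp_le[of "cmod (v j)" 1] by simp
  qed
  have t: "cmod (\<Sum>j\<in>UNIV. M i j * v j) \<le> (\<Sum>j\<in>UNIV. cmod (M i j))" for i
  proof -
    have "cmod (\<Sum>j\<in>UNIV. M i j * v j) \<le> (\<Sum>j\<in>UNIV. cmod (M i j * v j))" by (rule norm_sum)
    also have "\<dots> \<le> (\<Sum>j\<in>UNIV. cmod (M i j))"
      by (rule sum_mono) (use v1 in \<open>auto simp: norm_mult intro: mult_left_le\<close>)
    finally show ?thesis .
  qed
  have "sqrt (\<Sum>i\<in>UNIV. (cmod (\<Sum>j\<in>UNIV. M i j * v j))\<^sup>2) = L2_set (\<lambda>i. cmod (\<Sum>j\<in>UNIV. M i j * v j)) UNIV"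
    by (simp add: L2_set_def)
  also have "\<dots> \<le> (\<Sum>i\<in>UNIV. cmod (\<Sum>j\<in>UNIV. M i j * v j))" by (rule L2_set_le_sum) simp
  also have "\<dots> \<le> (\<Sum>i\<in>UNIV. \<Sum>j\<in>UNIV. cmod (M i j))" by (rule sum_mono) (rule t)
  finally show "sqrt (\<Sum>i\<in>UNIV. (cmod (\<Sum>j\<in>UNIV. M i j * v j))\<^sup>2) \<le> (\<Sum>i\<in>UNIV. \<Sum>j\<in>UNIV. cmod (M i j))" .
qed

lemma opnorm_upper:
  fixes M :: "'n::finite \<Rightarrow> 'n \<Rightarrow> complex"
  assumes "(\<Sum>i\<in>UNIV. (cmod (v i))\<^sup>2) \<le> 1"
  shows "sqrt (\<Sum>i\<in>UNIV. (cmod (\<Sum>j\<in>UNIV. M i j * v j))\<^sup>2) \<le> mat_opnorm UNIV M"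
  unfolding mat_opnorm_def by (rule cSUP_upper[OF _ opnorm_bdd]) (use assms in simp)

lemma opnorm_nonneg: "mat_opnorm UNIV (M :: 'n::finite \<Rightarrow> 'n \<Rightarrow> complex) \<ge> 0"
  using opnorm_upper[of "\<lambda>_. 0" M] by simp

lemma app_norm:
  fixes M :: "'n::finite \<Rightarrow> 'n \<Rightarrow> complex"
  shows "norm (app M x) \<le> mat_opnorm UNIV M * norm x"
proof (cases "x = 0")
  case True
  have "app M x = 0" using True unfolding app_def by (simp add: vec_eq_iff)
  then show ?thesis using opnorm_nonneg[of M] by simp
next
  case False
  then have nx: "norm x > 0" by simp
  define v where "v = (\<lambda>b. x$b / of_real (norm x))"
  have "(\<Sum>i\<in>UNIV. (cmod (v i))\<^sup>2) = (\<Sum>i\<in>UNIV. (cmod (x$i))\<^sup>2) / (norm x)\<^sup>2"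
    by (simp add: v_def norm_divide power_divide sum_divide_distrib)
  also have "\<dots> = 1" using nx by (simp add: norm_vec_sq[symmetric])
  finally have v1: "(\<Sum>i\<in>UNIV. (cmod (v i))\<^sup>2) \<le> 1" by simp
  have "(\<Sum>j\<in>UNIV. M i j * v j) = (app M x)$i / of_real (norm x)" for i
    by (simp add: app_def v_def sum_divide_distrib)
  then have "sqrt (\<Sum>i\<in>UNIV. (cmod (\<Sum>j\<in>UNIV. M i j * v j))\<^sup>2) = sqrt ((norm (app M x))\<^sup>2 / (norm x)\<^sup>2)"
    by (simp add: norm_divide power_divide sum_divide_distrib norm_vec_sq)
  also have "\<dots> = norm (app M x) / norm x" by (simp add: real_sqrt_divide)
  finally have "norm (app M x) / norm x \<le> mat_opnorm UNIV M"
    using opnorm_upper[OF v1, of M] by simp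
  then show ?thesis using nx by (simp add: divide_le_eq)
qed

lemma entry_le:
  fixes M :: "'n::finite \<Rightarrow> 'n \<Rightarrow> complex"
  shows "cmod (M a b) \<le> mat_opnorm UNIV M"
proof -
  define v where "v = (\<lambda>j::'n. if j = b then (1::complex) else 0)"
  have e: "(\<lambda>i. (cmod (v i))\<^sup>2) = (\<lambda>i. if i = b then (1::real) else 0)" by (auto simp: v_def)
  have v1: "(\<Sum>i\<in>UNIV. (cmod (v i))\<^sup>2) \<le> 1" by (subst e) simp
  have s: "(\<Sum>j\<in>UNIV. M i j * v j) = M i b" for i by (simp add: v_def if_distrib cong: if_cong)
  have "(cmod (M a b))\<^sup>2 \<le> (\<Sum>i\<in>UNIV. (cmod (M i b))\<^sup>2)" by (rule member_le_sum) auto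
  then have "cmod (M a b) \<le> sqrt (\<Sum>i\<in>UNIV. (cmod (M i b))\<^sup>2)" by (rule real_le_rsqrt)
  also have "\<dots> \<le> mat_opnorm UNIV M" using opnorm_upper[OF v1, of M] by (simp add: s)
  finally show ?thesis .
qed

lemma has_sum_vec:
  fixes f :: "'a \<Rightarrow> 'b::{topological_comm_monoid_add}^'n"
  assumes "\<And>i. ((\<lambda>n. f n $ i) has_sum S $ i) A"
  shows "(f has_sum S) A"
  using assms unfolding has_sum_def by (intro vec_tendstoI) simp

lemma block_bound:
  fixes D :: "int \<Rightarrow> 'n::finite \<Rightarrow> 'n \<Rightarrow> complex" and \<beta> :: "int \<Rightarrow> real" and S :: "int set"
  assumes S: "finite S"
    and blk: "\<And>j j' x. j \<in> S \<Longrightarrow> j' \<in> S \<Longrightarrow> norm (app (D (j - j')) x) \<le> \<beta> (j - j') * norm x"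
    and b0: "\<And>j j'. j \<in> S \<Longrightarrow> j' \<in> S \<Longrightarrow> \<beta> (j - j') \<ge> 0"
    and row: "\<And>j. j \<in> S \<Longrightarrow> (\<Sum>j'\<in>S. \<beta> (j - j')) \<le> R"
    and col: "\<And>j'. j' \<in> S \<Longrightarrow> (\<Sum>j\<in>S. \<beta> (j - j')) \<le> R"
    and R0: "R \<ge> 0"
  shows "mat_opnorm (S \<times> UNIV) (\<lambda>(j, a) (j', b). D (j - j') a b) \<le> R"
  unfolding mat_opnorm_def
proof (rule cSUP_least)
  show "{v. (\<Sum>i\<in>S \<times> UNIV. (cmod (v i))\<^sup>2) \<le> 1} \<noteq> {}"
  proof -
    have "(\<lambda>_. 0) \<in> {v. (\<Sum>i\<in>S \<times> UNIV. (cmod (v i))\<^sup>2) \<le> (1::real)}" by simp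
    then show ?thesis by (metis empty_iff)
  qed
next
  fix v :: "int \<times> 'n \<Rightarrow> complex"
  assume "v \<in> {v. (\<Sum>i\<in>S \<times> UNIV. (cmod (v i))\<^sup>2) \<le> 1}"
  then have v: "(\<Sum>i\<in>S \<times> UNIV. (cmod (v i))\<^sup>2) \<le> 1" by simp
  define x where "x = (\<lambda>j. \<chi> b. v (j, b))"
  define y where "y = (\<lambda>j. \<Sum>j'\<in>S. app (D (j - j')) (x j'))"
  have inner: "(\<Sum>j'\<in>S. \<Sum>b\<in>UNIV. D (j - j') a b * v (j', b)) = y j $ a" for j a
    by (simp add: y_def app_def x_def)
  have L: "(\<Sum>i\<in>S \<times> UNIV. (cmod (\<Sum>k\<in>S \<times> UNIV. (\<lambda>(j, a) (j', b). D (j - j') a b) i k * v k))\<^sup>2)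
      = (\<Sum>j\<in>S. (norm (y j))\<^sup>2)"
    by (simp add: sum_cart S inner norm_vec_sq)
  have X: "(\<Sum>j\<in>S. (norm (x j))\<^sup>2) \<le> 1"
    using v by (simp add: sum_cart S norm_vec_sq x_def)
  have Y: "norm (y j) \<le> (\<Sum>j'\<in>S. \<beta> (j - j') * norm (x j'))" if j: "j \<in> S" for j
    unfolding y_def by (rule order_trans[OF norm_sum sum_mono]) (use blk j in auto)
  have "(\<Sum>j\<in>S. (norm (y j))\<^sup>2) \<le> (\<Sum>j\<in>S. (\<Sum>j'\<in>S. \<beta> (j - j') * norm (x j'))\<^sup>2)"
    by (rule sum_mono, rule power_mono[OF Y]) auto
  also have "\<dots> \<le> R\<^sup>2 * (\<Sum>j\<in>S. (norm (x j))\<^sup>2)"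
    by (rule schur[OF S]) (use b0 row col in auto)
  also have "\<dots> \<le> R\<^sup>2 * 1" by (rule mult_left_mono[OF X]) simp
  finally have "(\<Sum>j\<in>S. (norm (y j))\<^sup>2) \<le> R\<^sup>2" by simp
  then have "sqrt (\<Sum>j\<in>S. (norm (y j))\<^sup>2) \<le> sqrt (R\<^sup>2)" by (rule real_sqrt_le_mono)
  then show "sqrt (\<Sum>i\<in>S \<times> UNIV. (cmod (\<Sum>k\<in>S \<times> UNIV. (\<lambda>(j, a) (j', b). D (j - j') a b) i k * v k))\<^sup>2) \<le> R"
    unfolding L using R0 by simp
qed

lemma aliasing:
  fixes Pk :: "real \<Rightarrow> 'n::finite \<Rightarrow> 'n \<Rightarrow> complex" and L :: nat and r :: int
  assumes cont: "continuous_on UNIV (\<lambda>k. Pk k a b)" and periodic: "\<And>k. Pk (k + 2*pi) a b = Pk k a b"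
    and L: "L > 0" and summ: "(\<lambda>s. cmod (Pinf_block Pk s 0 a b)) summable_on UNIV"
  shows "((\<lambda>n::int. Pinf_block Pk (r + n * int L) 0 a b) has_sum
           (PL_block Pk L r 0 a b - Pinf_block Pk r 0 a b)) (UNIV - {0})"
proof -
  define p where "p = (\<lambda>k. Pk k a b)"
  define c where "c = (\<lambda>s. Pinf_block Pk s 0 a b)"
  have cdef: "c s = integral {-pi..pi} (\<lambda>k. cis (k * of_int s) * p k) / of_real (2*pi)" for s
    by (simp add: c_def p_def Pinf_block_def cis_conv_exp)
  have FI: "((\<lambda>s. c s * cis (- (k * of_int s))) has_sum p k) UNIV" for k
    by (rule fourier_inversion[OF _ _ cdef]) (use cont periodic summ in \<open>auto simp: p_def c_def\<close>)
  define km where "km = (\<lambda>m::nat. 2 * pi * real m / real L)"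
  have PL: "PL_block Pk L r 0 a b = (\<Sum>m\<in>{1..L}. (cis (km m * of_int r) / of_nat L) * p (km m))"
    by (simp add: PL_block_def km_def p_def cis_conv_exp Let_def sum_divide_distrib)
  have each: "((\<lambda>s. (cis (km m * of_int r) / of_nat L) * (c s * cis (- (km m * of_int s)))) has_sum
       ((cis (km m * of_int r) / of_nat L) * p (km m))) UNIV" for m
    by (rule has_sum_cmult_right[OF FI])
  have S1: "((\<lambda>s. \<Sum>m\<in>{1..L}. (cis (km m * of_int r) / of_nat L) * (c s * cis (- (km m * of_int s))))
      has_sum PL_block Pk L r 0 a b) UNIV"
    unfolding PL by (rule has_sum_finsum) (simp, rule each)
  have trm: "(\<Sum>m\<in>{1..L}. (cis (km m * of_int r) / of_nat L) * (c s * cis (- (km m * of_int s))))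
      = (if int L dvd (r - s) then c s else 0)" for s
  proof -
    have "(cis (km m * of_int r) / of_nat L) * (c s * cis (- (km m * of_int s))) =
        c s / of_nat L * cis (2 * pi * real m / real L * of_int (r - s))" for m
    proof -
      have e: "km m * of_int r + - (km m * of_int s) = 2 * pi * real m / real L * of_int (r - s)"
        using L by (simp add: km_def field_simps)
      have "(cis (km m * of_int r) / of_nat L) * (c s * cis (- (km m * of_int s))) =
          c s / of_nat L * (cis (km m * of_int r) * cis (- (km m * of_int s)))" by simp
      also have "\<dots> = c s / of_nat L * cis (2 * pi * real m / real L * of_int (r - s))"
        unfolding cis_mult e ..
      finally show ?thesis .
    qed
    then have "(\<Sum>m\<in>{1..L}. (cis (km m * of_int r) / of_nat L) * (c s * cis (- (km m * of_int s))))
        = (\<Sum>m\<in>{1..L}. c s / of_nat L * cis (2 * pi * real m / real L * of_int (r - s)))"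
      by (intro sum.cong refl)
    also have "\<dots> = c s / of_nat L * (\<Sum>m\<in>{1..L}. cis (2 * pi * real m / real L * of_int (r - s)))"
      by (simp only: sum_distrib_left)
    also have "\<dots> = (if int L dvd (r - s) then c s else 0)"
      unfolding roots_sum[OF L] using L by simp
    finally show ?thesis .
  qed
  have S2: "((\<lambda>s. if int L dvd (r - s) then c s else 0) has_sum PL_block Pk L r 0 a b) UNIV"
    using S1 unfolding trm .
  define h where "h = (\<lambda>n::int. r + n * int L)"
  have hin: "s \<in> range h \<longleftrightarrow> int L dvd (r - s)" for s
  proof
    assume "s \<in> range h"
    then obtain n where "s = r + n * int L" by (auto simp: h_def)
    then show "int L dvd (r - s)" by simp
  next
    assume "int L dvd (r - s)"
    then obtain q where "r - s = int L * q" by blast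
    then have "s = h (- q)" by (simp add: h_def algebra_simps)
    then show "s \<in> range h" by blast
  qed
  have S3: "(c has_sum PL_block Pk L r 0 a b) (range h)"
    using S2 by (subst (asm) has_sum_cong_neutral[where T="range h" and g=c]) (auto simp: hin)
  have inj: "inj h" unfolding h_def inj_def using L by simp
  have S4: "((\<lambda>n. c (h n)) has_sum PL_block Pk L r 0 a b) UNIV"
    using S3 has_sum_reindex[of h UNIV c] inj by (simp add: o_def)
  define F where "F = (\<lambda>n. c (h n))"
  have "F summable_on (UNIV - {0})"
    by (rule summable_on_subset_banach[OF has_sum_imp_summable[OF S4[folded F_def]]]) simp
  then have Fs: "(F has_sum infsum F (UNIV - {0})) (UNIV - {0})" by (simp add: has_sum_infsum)
  have "(F has_sum (F 0 + infsum F (UNIV - {0}))) (insert 0 (UNIV - {0}))"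
    by (rule has_sum_insert[OF _ Fs]) simp
  then have "(F has_sum (F 0 + infsum F (UNIV - {0}))) UNIV" by (simp add: insert_Diff_single)
  then have "F 0 + infsum F (UNIV - {0}) = PL_block Pk L r 0 a b"
    using S4[folded F_def] has_sum_unique by blast
  moreover have "F 0 = Pinf_block Pk r 0 a b" by (simp add: F_def c_def h_def)
  ultimately have "infsum F (UNIV - {0}) = PL_block Pk L r 0 a b - Pinf_block Pk r 0 a b" by (simp add: eq_diff_eq add.commute)
  then show ?thesis using Fs by (simp add: F_def c_def h_def)
qed

theorem lemma3:
  fixes Pk :: "real \<Rightarrow> 'n::finite \<Rightarrow> 'n \<Rightarrow> complex"
    and C \<kappa> :: real and l L :: nat
  assumes cont: "\<And>a b. continuous_on UNIV (\<lambda>k. Pk k a b)"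
    and periodic: "\<And>k a b. Pk (k + 2 * pi) a b = Pk k a b"
    and herm: "\<And>k a b. Pk k b a = cnj (Pk k a b)"
    and idem: "\<And>k a b. (\<Sum>c\<in>UNIV. Pk k a c * Pk k c b) = Pk k a b"
    and C_pos: "C > 0" and kappa_pos: "\<kappa> > 0"
    and l_ge: "1 \<le> l" and l_less: "l < L"
    and decay: "\<And>j j' :: int. mat_opnorm UNIV (Pinf_block Pk j j') \<le> C * exp (- \<kappa> * real_of_int \<bar>j - j'\<bar>)"
  shows "mat_opnorm ({1..int l} \<times> UNIV)
           (\<lambda>(j, a) (j', b). PL_block Pk L j j' a b - Pinf_block Pk j j' a b)
         \<le> 2 * C * sinh (\<kappa> * real l) / ((exp (\<kappa> * real L) - 1) * sinh \<kappa>)"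
proof -
  have L: "L > 0" using l_less l_ge by simp
  define Q where "Q = (\<lambda>s::int. Pinf_block Pk s 0)"
  define D where "D = (\<lambda>(r::int) a b. PL_block Pk L r 0 a b - Pinf_block Pk r 0 a b)"
  define E where "E = exp (\<kappa> * real L)"
  have E1: "E > 1" using kappa_pos L by (simp add: E_def)
  define \<beta> where "\<beta> = (\<lambda>r::int. C * ((exp (- \<kappa> * of_int r) + exp (\<kappa> * of_int r)) / (E - 1)))"
  have \<beta>_cosh: "\<beta> r = 2 * C / (E - 1) * cosh (\<kappa> * of_int r)" for r
  proof -
    have "exp (- \<kappa> * of_int r) + exp (\<kappa> * of_int r) = 2 * cosh (\<kappa> * of_int r)"
      by (simp add: cosh_def)
    then show ?thesis by (simp add: \<beta>_def)
  qed
  have mat: "(\<lambda>(j, a) (j', b). PL_block Pk L j j' a b - Pinf_block Pk j j' a b) = (\<lambda>(j, a) (j', b). D (j - j') a b)"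
    by (auto simp: fun_eq_iff D_def PL_block_def Pinf_block_def)
  have decay0: "mat_opnorm UNIV (Q s) \<le> C * exp (- \<kappa> * \<bar>real_of_int s\<bar>)" for s
    using decay[of s 0] by (simp add: Q_def)
  have summ: "(\<lambda>s. cmod (Pinf_block Pk s 0 a b)) summable_on UNIV" for a b
  proof (rule summable_on_comparison_test)
    show "(\<lambda>s. C * exp (- \<kappa> * \<bar>real_of_int s\<bar>)) summable_on UNIV"
      by (rule summable_on_cmult_right[OF exp_abs_summable[OF kappa_pos]])
    show "cmod (Pinf_block Pk s 0 a b) \<le> C * exp (- \<kappa> * \<bar>real_of_int s\<bar>)" for s
      using entry_le[of "Q s" a b] decay0[of s] by (simp add: Q_def)
  qed simp
  have al: "((\<lambda>n. Q (r + n * int L) a b) has_sum D r a b) (UNIV - {0})" for r a b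
    unfolding Q_def D_def by (rule aliasing[OF cont periodic L summ])
  have blockvec: "norm (app (D r) x) \<le> \<beta> r * norm x" if r: "\<bar>r\<bar> < int L" for r x
  proof -
    have hs: "((\<lambda>n. app (Q (r + n * int L)) x) has_sum app (D r) x) (UNIV - {0})"
    proof (rule has_sum_vec)
      fix i
      show "((\<lambda>n. app (Q (r + n * int L)) x $ i) has_sum app (D r) x $ i) (UNIV - {0})"
        unfolding app_def by (simp, rule has_sum_finsum) (simp_all add: has_sum_cmult_left[OF al])
    qed
    have rr: "\<bar>real_of_int r\<bar> < real L" using r by linarith
    have hg: "((\<lambda>n::int. C * exp (- \<kappa> * \<bar>real_of_int r + of_int n * real L\<bar>) * norm x) has_sum \<beta> r * norm x) (UNIV - {0})"
      unfolding \<beta>_def E_def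
      by (intro has_sum_cmult_left has_sum_cmult_right geom_int_sum[OF kappa_pos _ rr]) (use L in simp)
    show ?thesis
    proof (rule norm_infsum_le[OF hs hg])
      fix n :: int
      have "norm (app (Q (r + n * int L)) x) \<le> mat_opnorm UNIV (Q (r + n * int L)) * norm x"
        by (rule app_norm)
      also have "\<dots> \<le> C * exp (- \<kappa> * \<bar>real_of_int (r + n * int L)\<bar>) * norm x"
        by (rule mult_right_mono[OF decay0]) simp
      finally show "norm (app (Q (r + n * int L)) x) \<le> C * exp (- \<kappa> * \<bar>real_of_int r + of_int n * real L\<bar>) * norm x"
        by simp
    qed
  qed
  define S where "S = {1..int l}"
  define R where "R = 2 * C * sinh (\<kappa> * real l) / ((E - 1) * sinh \<kappa>)"
  have K0: "2 * C / (E - 1) \<ge> 0" using C_pos E1 by simp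
  have rowb: "(\<Sum>j'\<in>S. \<beta> (j - j')) \<le> R" if j: "j \<in> S" for j
  proof -
    have "(\<Sum>j'\<in>S. \<beta> (j - j')) = 2 * C / (E - 1) * (\<Sum>j'\<in>S. cosh (\<kappa> * of_int (j - j')))"
      by (simp add: \<beta>_cosh sum_distrib_left)
    also have "\<dots> \<le> 2 * C / (E - 1) * (sinh (\<kappa> * l) / sinh \<kappa>)"
      unfolding S_def by (rule mult_left_mono[OF cosh_row_bound[OF kappa_pos] K0]) (use j in \<open>simp_all add: S_def\<close>)
    also have "\<dots> = R" by (simp add: R_def)
    finally show ?thesis .
  qed
  have bsym: "\<beta> (j - j') = \<beta> (j' - j)" for j j'
  proof -
    have "\<kappa> * of_int (j' - j) = - (\<kappa> * of_int (j - j'))" by (simp add: algebra_simps)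
    then show ?thesis by (simp add: \<beta>_cosh)
  qed
  have "mat_opnorm (S \<times> UNIV) (\<lambda>(j, a) (j', b). D (j - j') a b) \<le> R"
  proof (rule block_bound)
    show "finite S" by (simp add: S_def)
    show "norm (app (D (j - j')) x) \<le> \<beta> (j - j') * norm x" if "j \<in> S" "j' \<in> S" for j j' x
      using that l_less by (intro blockvec) (auto simp: S_def)
    show "\<beta> (j - j') \<ge> 0" for j j'
      unfolding \<beta>_def using C_pos E1 by (intro mult_nonneg_nonneg divide_nonneg_nonneg add_nonneg_nonneg) auto
    show "(\<Sum>j'\<in>S. \<beta> (j - j')) \<le> R" if "j \<in> S" for j using rowb that .
    show "(\<Sum>j\<in>S. \<beta> (j - j')) \<le> R" if "j' \<in> S" for j'
      using rowb[OF that] by (simp add: bsym)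
    show "R \<ge> 0" unfolding R_def using C_pos E1 kappa_pos by (intro divide_nonneg_pos mult_nonneg_nonneg mult_pos_pos) auto
  qed
  then show ?thesis unfolding mat by (simp add: S_def R_def E_def)
qed

end
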